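(* Let $t$ be a positive integer with $3\nmid t$. Then for every positive integer $n$, $$b^{2}_{3,2t}(4n+3)\equiv 0 \pmod 4.$$
   Context: For integers $r\ge1$ write $f_r=\prod_{j\ge1}(1-q^{rj})$. For coprime positive integers $\ell,m$ and a positive integer $k$, $b^{k}_{\ell,m}(n)$ denotes the number of $k$-colored partitions of $n$ (each part receives one of $k$ colors) into parts not divisible by $\ell$ or by $m$; equivalently $\sum_{n\ge0} b^{k}_{\ell,m}(n)q^n=\dfrac{f_\ell^k f_m^k}{f_1^k f_{\ell m}^k}$. In particular $\sum_{n\ge0} b^{2}_{3,2t}(n)q^n=\dfrac{f_3^2f_{2t}^2}{f_1^2f_{6t}^2}$. *)

theory Defs
  imports Main "HOL-Library.Multiset"
begin

definition colored_partitions_avoiding :: "nat \<Rightarrow> nat \<Rightarrow> nat \<Rightarrow> nat \<Rightarrow> (nat \<times> nat) multiset set" where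
  "colored_partitions_avoiding k l m n =
     {M. (\<forall>x \<in># M. fst x \<ge> 1 \<and> snd x < k \<and> \<not> l dvd fst x \<and> \<not> m dvd fst x)
         \<and> sum_mset (image_mset fst M) = n}"

definition b_part :: "nat \<Rightarrow> nat \<Rightarrow> nat \<Rightarrow> nat \<Rightarrow> nat" where
  "b_part k l m n = card (colored_partitions_avoiding k l m n)"

end

theory Submission
  imports Defs "HOL-Computational_Algebra.Formal_Power_Series"
begin

unbundle fps_syntax

definition dil :: "nat \<Rightarrow> int fps \<Rightarrow> int fps" where
  "dil k f = Abs_fps (\<lambda>i. if k dvd i then f $ (i div k) else 0)"

lemma dil_nth: "dil k f $ i = (if k dvd i then f $ (i div k) else 0)"
  by (simp add: dil_def)

lemma dil_mult:
  assumes k: "k > 0"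
  shows "dil k (f * g) = dil k f * dil k g"
proof (rule fps_ext)
  fix n
  show "dil k (f * g) $ n = (dil k f * dil k g) $ n"
  proof (cases "k dvd n")
    case False
    have "(dil k f * dil k g) $ n = (\<Sum>i=0..n. dil k f $ i * dil k g $ (n - i))"
      by (simp add: fps_mult_nth)
    also have "\<dots> = 0"
    proof (rule sum.neutral, intro ballI)
      fix i assume i: "i \<in> {0..n}"
      show "dil k f $ i * dil k g $ (n - i) = 0"
      proof (cases "k dvd i \<and> k dvd (n - i)")
        case True
        then have "k dvd (i + (n - i))" by (intro dvd_add) auto
        with i False show ?thesis by auto
      next
        case False then show ?thesis by (auto simp: dil_nth)
      qed
    qed
    finally show ?thesis using False by (simp add: dil_nth)
  next
    case True
    then obtain m where n: "n = k * m" by blast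
    have "(dil k f * dil k g) $ n = (\<Sum>i=0..n. dil k f $ i * dil k g $ (n - i))"
      by (simp add: fps_mult_nth)
    also have "\<dots> = (\<Sum>i\<in>(\<lambda>j. k * j) ` {0..m}. dil k f $ i * dil k g $ (n - i))"
    proof (rule sum.mono_neutral_right)
      show "finite {0..n}" by simp
      show "(\<lambda>j. k * j) ` {0..m} \<subseteq> {0..n}" using n k by auto
      show "\<forall>i\<in>{0..n} - (\<lambda>j. k * j) ` {0..m}. dil k f $ i * dil k g $ (n - i) = 0"
      proof
        fix i assume i: "i \<in> {0..n} - (\<lambda>j. k * j) ` {0..m}"
        show "dil k f $ i * dil k g $ (n - i) = 0"
        proof (cases "k dvd i")
          case True
          then obtain j where j: "i = k * j" by blast
          with i n k have "j \<le> m" by auto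
          with i j show ?thesis by auto
        qed (simp add: dil_nth)
      qed
    qed
    also have "\<dots> = (\<Sum>j=0..m. dil k f $ (k * j) * dil k g $ (n - k * j))"
      by (subst sum.reindex) (use k in \<open>auto simp: inj_on_def\<close>)
    also have "\<dots> = (\<Sum>j=0..m. f $ j * g $ (m - j))"
    proof (rule sum.cong)
      fix j assume j: "j \<in> {0..m}"
      have "n - k * j = k * (m - j)" using n by (simp add: right_diff_distrib')
      then show "dil k f $ (k * j) * dil k g $ (n - k * j) = f $ j * g $ (m - j)"
        using k by (simp add: dil_nth)
    qed simp
    also have "\<dots> = (f * g) $ m" by (simp add: fps_mult_nth)
    finally show ?thesis using n k by (simp add: dil_nth)
  qed
qed

lemma dil_add: "dil k (f + g) = dil k f + dil k g"
  by (rule fps_ext) (simp add: dil_nth)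

lemma dil_one: "k > 0 \<Longrightarrow> dil k 1 = 1"
  by (rule fps_ext) (auto simp: dil_nth elim: dvdE)

lemma dil_X: "k > 0 \<Longrightarrow> dil k fps_X = fps_X ^ k"
  by (rule fps_ext) (auto simp: dil_nth elim!: dvdE)

lemma dil_dil: "a > 0 \<Longrightarrow> b > 0 \<Longrightarrow> dil a (dil b f) = dil (a * b) f"
  apply (rule fps_ext)
  apply (auto simp: dil_nth div_mult2_eq mult.commute elim!: dvdE)
  done

lemma dil_prod:
  assumes "k > 0"
  shows "dil k (\<Prod>j\<in>A. f j) = (\<Prod>j\<in>A. dil k (f j))"
proof (cases "finite A")
  case True
  then show ?thesis
    by (induction A rule: finite_induct) (simp_all add: dil_one dil_mult assms)
qed (simp add: dil_one assms)

definition cg :: "int \<Rightarrow> nat \<Rightarrow> int fps \<Rightarrow> int fps \<Rightarrow> bool" where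
  "cg m D f g \<longleftrightarrow> (\<forall>n\<le>D. m dvd (f $ n - g $ n))"

definition evenf :: "int fps \<Rightarrow> bool" where
  "evenf f \<longleftrightarrow> (\<forall>n. odd n \<longrightarrow> f $ n = 0)"

lemma cg_refl: "cg m D f f" by (simp add: cg_def)
lemma cg_eq: "f = g \<Longrightarrow> cg m D f g" by (simp add: cg_def)
lemma cg_sym: "cg m D f g \<Longrightarrow> cg m D g f"
  unfolding cg_def by (metis dvd_minus_iff minus_diff_eq)
lemma cg_trans: "cg m D f g \<Longrightarrow> cg m D g h \<Longrightarrow> cg m D f h"
  unfolding cg_def by (metis diff_add_cancel dvd_add add_diff_eq diff_diff_eq2)
lemma cg_add: "cg m D f g \<Longrightarrow> cg m D f' g' \<Longrightarrow> cg m D (f + f') (g + g')"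
  unfolding cg_def by (auto simp: add_diff_add dvd_add)
lemma cg_mono: "cg m D f g \<Longrightarrow> D' \<le> D \<Longrightarrow> cg m D' f g"
  unfolding cg_def by auto

lemma cg_mult_right: "cg m D f g \<Longrightarrow> cg m D (f * h) (g * h)"
  unfolding cg_def
proof (intro allI impI)
  fix n assume H: "\<forall>n\<le>D. m dvd f $ n - g $ n" and n: "n \<le> D"
  have "(f * h) $ n - (g * h) $ n = (\<Sum>i=0..n. (f $ i - g $ i) * h $ (n - i))"
    by (simp add: fps_mult_nth sum_subtractf[symmetric] left_diff_distrib)
  also have "m dvd \<dots>"
    using H n by (intro dvd_sum) auto
  finally show "m dvd (f * h) $ n - (g * h) $ n" .
qed

lemma cg_mult: "cg m D f g \<Longrightarrow> cg m D f' g' \<Longrightarrow> cg m D (f * f') (g * g')"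
proof -
  assume a: "cg m D f g" and b: "cg m D f' g'"
  have "cg m D (f * f') (g * f')" using a by (rule cg_mult_right)
  moreover have "cg m D (f' * g) (g' * g)" using b by (rule cg_mult_right)
  ultimately show ?thesis by (metis cg_trans mult.commute)
qed

lemma cg_const_mult: "cg m D f g \<Longrightarrow> cg (c * m) D (fps_const c * f) (fps_const c * g)"
  unfolding cg_def by (auto simp: right_diff_distrib[symmetric])

lemma cg_zero: "cg m D (fps_const m * f) 0"
  unfolding cg_def by simp

lemma cg_dvd: "cg m D f g \<Longrightarrow> m' dvd m \<Longrightarrow> cg m' D f g"
  unfolding cg_def using dvd_trans by blast

lemma cg_dil: "k > 0 \<Longrightarrow> (\<forall>D. cg m D f g) \<Longrightarrow> cg m D (dil k f) (dil k g)"
  unfolding cg_def by (auto simp: dil_nth)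

lemma evenf_mult: "evenf f \<Longrightarrow> evenf g \<Longrightarrow> evenf (f * g)"
  unfolding evenf_def
proof (intro allI impI)
  fix n :: nat assume f: "\<forall>n. odd n \<longrightarrow> f $ n = 0" and g: "\<forall>n. odd n \<longrightarrow> g $ n = 0"
    and n: "odd n"
  have "(f * g) $ n = (\<Sum>i=0..n. f $ i * g $ (n - i))" by (simp add: fps_mult_nth)
  also have "\<dots> = 0"
  proof (rule sum.neutral, intro ballI)
    fix i assume "i \<in> {0..n}"
    show "f $ i * g $ (n - i) = 0"
    proof (cases "odd i")
      case True then show ?thesis using f by simp
    next
      case False
      then have "odd (n - i)" using n \<open>i \<in> {0..n}\<close> by auto
      then show ?thesis using g by simp
    qed
  qed
  finally show "(f * g) $ n = 0" .
qed

lemma evenf_add: "evenf f \<Longrightarrow> evenf g \<Longrightarrow> evenf (f + g)"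
  unfolding evenf_def by simp

lemma evenf_dil: "evenf (dil 2 f)"
  unfolding evenf_def by (simp add: dil_nth)

lemma evenf_nth: "evenf f \<Longrightarrow> odd n \<Longrightarrow> f $ n = 0"
  unfolding evenf_def by simp

lemma oddconv1:
  assumes Y: "evenf Y" and W: "\<forall>k\<le>D. odd k \<longrightarrow> m dvd W $ k" and i: "odd i" "i \<le> D"
  shows "m dvd (Y * W) $ i"
proof -
  have "(Y * W) $ i = (\<Sum>j=0..i. Y $ j * W $ (i - j))" by (simp add: fps_mult_nth)
  also have "m dvd \<dots>"
  proof (rule dvd_sum)
    fix j assume j: "j \<in> {0..i}"
    show "m dvd Y $ j * W $ (i - j)"
    proof (cases "odd j")
      case True then show ?thesis using Y by (simp add: evenf_nth)
    next
      case False
      then have "odd (i - j)" using i j by auto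
      then show ?thesis using W i j by auto
    qed
  qed
  finally show ?thesis .
qed

lemma oddconv2:
  assumes E: "evenf E" and W: "\<forall>k\<le>D. odd k \<longrightarrow> m dvd (S $ k - T $ k)" and i: "odd i" "i \<le> D"
  shows "m dvd ((S * E) $ i - (T * E) $ i)"
proof -
  have "(S * E) $ i - (T * E) $ i = (\<Sum>j=0..i. (S $ j - T $ j) * E $ (i - j))"
    by (simp add: fps_mult_nth sum_subtractf[symmetric] left_diff_distrib)
  also have "m dvd \<dots>"
  proof (rule dvd_sum)
    fix j assume j: "j \<in> {0..i}"
    show "m dvd (S $ j - T $ j) * E $ (i - j)"
    proof (cases "odd (i - j)")
      case True then show ?thesis using E by (simp add: evenf_nth)
    next
      case False
      then have "odd j" using i j by auto
      then show ?thesis using W i j by auto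
    qed
  qed
  finally show ?thesis .
qed

lemma inv_sum_dvd:
  fixes g :: "'a \<Rightarrow> int"
  assumes "finite A" "\<forall>x\<in>A. f x \<in> A \<and> f (f x) = x"
    "\<forall>x\<in>A. f x \<noteq> x \<longrightarrow> m dvd (g x + g (f x))"
  shows "m dvd (\<Sum>x\<in>A. g x) - (\<Sum>x\<in>{x\<in>A. f x = x}. g x)"
  using assms
proof (induction "card A" arbitrary: A rule: less_induct)
  case less
  show ?case
  proof (cases "\<exists>x\<in>A. f x \<noteq> x")
    case False
    then have "{x\<in>A. f x = x} = A" by auto
    then show ?thesis by simp
  next
    case True
    then obtain x where x: "x \<in> A" "f x \<noteq> x" by blast
    define A' where "A' = A - {x, f x}"
    have fx: "f x \<in> A" using less.prems x by auto
    have fin: "finite A'" using less.prems by (simp add: A'_def)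
    have cl: "\<forall>y\<in>A'. f y \<in> A' \<and> f (f y) = y"
      using less.prems x unfolding A'_def by (metis DiffE DiffI insertCI insertE singletonD)
    have cA: "card A' < card A"
      using less.prems x fx unfolding A'_def by (intro psubset_card_mono) auto
    have IH: "m dvd (\<Sum>y\<in>A'. g y) - (\<Sum>y\<in>{y\<in>A'. f y = y}. g y)"
      using less.hyps[OF cA fin cl] less.prems by (auto simp: A'_def)
    have fixeq: "{y\<in>A'. f y = y} = {y\<in>A. f y = y}"
      using x less.prems unfolding A'_def by auto
    have "(\<Sum>y\<in>A. g y) = g x + (\<Sum>y\<in>A - {x}. g y)"
      using x less.prems by (simp add: sum.remove)
    also have "(\<Sum>y\<in>A - {x}. g y) = g (f x) + (\<Sum>y\<in>A - {x} - {f x}. g y)"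
      using x fx less.prems by (intro sum.remove) auto
    also have "A - {x} - {f x} = A'" unfolding A'_def by auto
    finally have "(\<Sum>y\<in>A. g y) = g x + g (f x) + (\<Sum>y\<in>A'. g y)" by simp
    moreover have "m dvd g x + g (f x)" using less.prems x by auto
    ultimately show ?thesis using IH fixeq
      by (metis (no_types, lifting) add_diff_eq dvd_add)
  qed
qed

lemma frob:
  fixes f :: "int fps"
  shows "cg 2 D (f * f) (dil 2 f)"
  unfolding cg_def
proof (intro allI impI)
  fix n :: nat assume "n \<le> D"
  let ?g = "\<lambda>i. f $ i * f $ (n - i)"
  have h: "2 dvd (\<Sum>i\<in>{0..n}. ?g i) - (\<Sum>i\<in>{i\<in>{0..n}. n - i = i}. ?g i)"
    by (rule inv_sum_dvd) (auto simp: mult.commute)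
  show "2 dvd (f * f) $ n - dil 2 f $ n"
  proof (cases "even n")
    case True
    have fs: "{i\<in>{0..n}. n - i = i} = {n div 2}" using True by auto
    have nn: "n - n div 2 = n div 2" using True by auto
    then have h2: "2 dvd (f * f) $ n - f $ (n div 2) * f $ (n div 2)"
      using h unfolding fs by (simp add: fps_mult_nth nn)
    have "2 dvd f $ (n div 2) * f $ (n div 2) - f $ (n div 2)"
    proof -
      have "f $ (n div 2) * f $ (n div 2) - f $ (n div 2) = f $ (n div 2) * (f $ (n div 2) - 1)"
        by (simp add: algebra_simps)
      moreover have "even (f $ (n div 2) * (f $ (n div 2) - 1))" by simp
      ultimately show ?thesis by simp
    qed
    then show ?thesis using h2 True
      by (simp add: dil_nth)
  next
    case False
    have e: "{i\<in>{0..n}. n - i = i} = {}"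
    proof -
      { fix j assume "n - j = j"
        then have "n = 2 * j" by auto
        with False have False by auto }
      then show ?thesis by auto
    qed
    show ?thesis using h False unfolding e by (simp add: fps_mult_nth dil_nth)
  qed
qed

lemma root_lemma:
  fixes V :: "int fps"
  assumes V0: "odd (V $ 0)" and H: "\<forall>i\<le>M. odd i \<longrightarrow> 4 dvd (V * V) $ i"
  shows "\<forall>i\<le>M. odd i \<longrightarrow> 2 dvd V $ i"
proof (intro allI impI)
  fix i assume "i \<le> M" "odd i"
  then show "2 dvd V $ i"
  proof (induction i rule: less_induct)
    case (less i)
    have i1: "i \<ge> 1" using less.prems by (cases i) auto
    let ?g = "\<lambda>j. V $ j * V $ (i - j)"
    have split: "{0..i} = insert 0 (insert i {1..i-1})" using i1 by auto
    have s: "(\<Sum>j\<in>{0..i}. ?g j) = ?g 0 + ?g i + (\<Sum>j\<in>{1..i-1}. ?g j)"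
      using i1 by (subst split) auto
    have h: "4 dvd (\<Sum>j\<in>{1..i-1}. ?g j) - (\<Sum>j\<in>{j\<in>{1..i-1}. i - j = j}. ?g j)"
    proof (rule inv_sum_dvd)
      show "\<forall>x\<in>{1..i - 1}. i - x \<noteq> x \<longrightarrow> 4 dvd ?g x + ?g (i - x)"
      proof (intro ballI impI)
        fix x assume x: "x \<in> {1..i-1}"
        have "odd x \<or> odd (i - x)" using less.prems x by auto
        then have "2 dvd V $ x \<or> 2 dvd V $ (i - x)"
        proof
          assume "odd x" then show ?thesis using less.IH[of x] less.prems x by auto
        next
          assume "odd (i - x)" then show ?thesis using less.IH[of "i - x"] less.prems x by auto
        qed
        then have "2 dvd ?g x" by auto
        moreover have "i - (i - x) = x" using x by auto
        then have "?g (i - x) = ?g x" by (simp add: mult.commute)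
        ultimately show "4 dvd ?g x + ?g (i - x)"
          by (auto elim!: dvdE simp: algebra_simps)
      qed
    qed auto
    have e: "{j\<in>{1..i-1}. i - j = j} = {}"
    proof -
      { fix j assume "i - j = j"
        then have "i = 2 * j" by auto
        with less.prems have False by auto }
      then show ?thesis by auto
    qed
    have h4: "4 dvd (\<Sum>j\<in>{1..i-1}. ?g j)" using h unfolding e by simp
    have "4 dvd (V * V) $ i" using H less.prems by auto
    moreover have "(V * V) $ i = ?g 0 + ?g i + (\<Sum>j\<in>{1..i-1}. ?g j)"
      using s by (simp add: fps_mult_nth)
    ultimately have "4 dvd (?g 0 + ?g i + (\<Sum>j\<in>{1..i-1}. ?g j)) - (\<Sum>j\<in>{1..i-1}. ?g j)"
      using h4 by (metis dvd_diff)
    then have "4 dvd ?g 0 + ?g i" by simp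
    then have "4 dvd 2 * (V $ 0 * V $ i)" by (simp add: mult.commute)
    then obtain k where "2 * (V $ 0 * V $ i) = 4 * k" by (elim dvdE)
    then have "V $ 0 * V $ i = 2 * k" by simp
    then have "2 dvd V $ 0 * V $ i" by simp
    then show ?case using V0 by auto
  qed
qed

definition G :: "nat \<Rightarrow> int fps" where
  "G k = Abs_fps (\<lambda>i. if k dvd i then 1 else 0)"

definition gg :: "nat \<Rightarrow> int fps" where
  "gg k = Abs_fps (\<lambda>i. if k dvd i \<and> i \<noteq> 0 then 1 else 0)"

lemma G_nth: "G k $ i = (if k dvd i then 1 else 0)" by (simp add: G_def)
lemma gg_nth: "gg k $ i = (if k dvd i \<and> i \<noteq> 0 then 1 else 0)" by (simp add: gg_def)

lemma G_gg: "G k = 1 + gg k"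
  by (rule fps_ext) (auto simp: G_nth gg_nth)

lemma G_inv:
  assumes k: "k > 0" shows "(1 - fps_X ^ k) * G k = 1"
proof (rule fps_ext)
  fix n
  have e: "((1 - fps_X ^ k) * G k) $ n = G k $ n - (fps_X ^ k * G k) $ n"
    by (simp add: left_diff_distrib)
  show "((1 - fps_X ^ k) * G k) $ n = (1 :: int fps) $ n"
  proof (cases "n < k")
    case True
    then have "k dvd n \<longleftrightarrow> n = 0" using k by (auto dest: dvd_imp_le)
    then show ?thesis using True e by (simp add: fps_X_power_mult_nth G_nth)
  next
    case False
    then have "k dvd n \<longleftrightarrow> k dvd (n - k)"
      by (metis dvd_diff_nat dvd_refl le_add_diff_inverse2 not_less dvd_add)
    then show ?thesis using False e k by (simp add: fps_X_power_mult_nth G_nth)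
  qed
qed

lemma dil_G: "k > 0 \<Longrightarrow> dil k (G j) = G (k * j)"
  by (rule fps_ext) (auto simp: dil_nth G_nth elim!: dvdE)

lemma dil_gg: "k > 0 \<Longrightarrow> dil k (gg j) = gg (k * j)"
  by (rule fps_ext) (auto simp: dil_nth gg_nth elim!: dvdE)

lemma Gsq:
  assumes k: "k > 0"
  shows "G k * G k = dil 2 (G k) * (1 + fps_const 2 * gg k)"
proof -
  let ?a = "(1 - fps_X ^ k :: int fps)"
  have a0: "?a \<noteq> 0"
  proof
    assume "?a = 0"
    then have "?a $ k = 0" by simp
    then show False using k by simp
  qed
  have L: "?a * ?a * (G k * G k) = 1"
    using G_inv[OF k] by (metis mult.assoc mult.commute mult_1)
  have "?a * (1 + fps_const 2 * gg k) = 1 + fps_X ^ k"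
  proof -
    have "(1 + fps_const 2 * gg k) = (fps_const 2 * G k - 1)"
      by (rule fps_ext) (simp add: G_nth gg_nth)
    then have "?a * (1 + fps_const 2 * gg k) = ?a * (fps_const 2 * G k - 1)"
      by simp
    also have "\<dots> = fps_const 2 * (?a * G k) - ?a" by (simp add: algebra_simps)
    also have "\<dots> = fps_const 2 - ?a" using G_inv[OF k] by simp
    also have "\<dots> = 1 + fps_X ^ k" using k by (intro fps_ext) simp
    finally show ?thesis .
  qed
  note eq = this
  have "?a * ?a * (dil 2 (G k) * (1 + fps_const 2 * gg k)) =
      (?a * (1 + fps_const 2 * gg k)) * ?a * G (2 * k)"
    using k by (simp add: dil_G ac_simps)
  also have "\<dots> = ((1 + fps_X ^ k) * ?a) * G (2 * k)" using eq by simp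
  also have "(1 + fps_X ^ k) * ?a = 1 - fps_X ^ (2 * k)"
    by (simp add: algebra_simps power_mult_distrib power2_eq_square power_add[symmetric] mult_2)
  also have "(1 - fps_X ^ (2 * k)) * G (2 * k) = 1" using k by (intro G_inv) simp
  finally have R: "?a * ?a * (dil 2 (G k) * (1 + fps_const 2 * gg k)) = 1" .
  from L R have "?a * ?a * (G k * G k) = ?a * ?a * (dil 2 (G k) * (1 + fps_const 2 * gg k))"
    by simp
  then show ?thesis using a0 by simp
qed

lemma prod4:
  assumes "finite A"
  shows "cg 4 D (\<Prod>j\<in>A. 1 + fps_const 2 * h j) (1 + fps_const 2 * (\<Sum>j\<in>A. h j))"
  using assms
proof (induction A rule: finite_induct)
  case empty
  then show ?case by (simp add: cg_refl)
next
  case (insert x A)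
  let ?P = "\<Prod>j\<in>A. 1 + fps_const 2 * h j"
  let ?S = "\<Sum>j\<in>A. h j"
  have "cg 4 D ((1 + fps_const 2 * h x) * ?P) ((1 + fps_const 2 * h x) * (1 + fps_const 2 * ?S))"
    by (intro cg_mult cg_refl insert.IH)
  moreover have "(1 + fps_const 2 * h x) * (1 + fps_const 2 * ?S) =
      (1 + fps_const 2 * (h x + ?S)) + fps_const 4 * (h x * ?S)"
    by (simp add: algebra_simps fps_const_mult[symmetric])
  moreover have "cg 4 D ((1 + fps_const 2 * (h x + ?S)) + fps_const 4 * (h x * ?S))
                       ((1 + fps_const 2 * (h x + ?S)) + 0)"
    by (intro cg_add cg_refl cg_zero)
  ultimately show ?case using insert by (simp add: cg_trans)
qed

definition parts :: "'a set \<Rightarrow> ('a \<Rightarrow> nat) \<Rightarrow> nat \<Rightarrow> 'a multiset set" where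
  "parts A w n = {M. set_mset M \<subseteq> A \<and> sum_mset (image_mset w M) = n}"

lemma G_mult_nth:
  assumes k: "k > 0"
  shows "(G k * P) $ n = (\<Sum>c=0..n div k. P $ (n - c * k))"
proof -
  have "(G k * P) $ n = (\<Sum>i=0..n. G k $ i * P $ (n - i))" by (simp add: fps_mult_nth)
  also have "\<dots> = (\<Sum>i\<in>(\<lambda>c. c * k) ` {0..n div k}. G k $ i * P $ (n - i))"
  proof (rule sum.mono_neutral_right)
    show "(\<lambda>c. c * k) ` {0..n div k} \<subseteq> {0..n}"
      by auto (metis div_times_less_eq_dividend le_trans mult_le_mono1)
    show "\<forall>i\<in>{0..n} - (\<lambda>c. c * k) ` {0..n div k}. G k $ i * P $ (n - i) = 0"
    proof
      fix i assume i: "i \<in> {0..n} - (\<lambda>c. c * k) ` {0..n div k}"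
      show "G k $ i * P $ (n - i) = 0"
      proof (cases "k dvd i")
        case True
        then obtain c where c: "i = c * k" by (metis dvd_def mult.commute)
        with i have "c \<le> n div k" using k
          by (metis atLeastAtMost_iff DiffE div_le_mono nonzero_mult_div_cancel_right not_gr0)
        with c i show ?thesis by auto
      qed (simp add: G_nth)
    qed
  qed simp
  also have "\<dots> = (\<Sum>c=0..n div k. G k $ (c * k) * P $ (n - c * k))"
    by (subst sum.reindex) (use k in \<open>auto simp: inj_on_def\<close>)
  also have "\<dots> = (\<Sum>c=0..n div k. P $ (n - c * k))" by (simp add: G_nth)
  finally show ?thesis .
qed

lemma mem_le_sum_mset: "x \<in># M \<Longrightarrow> (w x :: nat) \<le> sum_mset (image_mset w M)"
  by (metis le_add1 multi_member_split image_mset_add_mset sum_mset.add_mset)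

lemma count_parts:
  assumes "finite A" "\<forall>a\<in>A. w a > 0"
  shows "finite (parts A w n) \<and> int (card (parts A w n)) = (\<Prod>a\<in>A. G (w a)) $ n"
  using assms
proof (induction A arbitrary: n rule: finite_induct)
  case empty
  have "parts {} w n = (if n = 0 then {{#}} else {})"
    by (auto simp: parts_def)
  then show ?case by simp
next
  case (insert a A)
  let ?k = "w a"
  have k: "?k > 0" using insert.prems by auto
  have A: "\<forall>a\<in>A. w a > 0" using insert.prems by auto
  let ?F = "\<lambda>c. (\<lambda>M. replicate_mset c a + M) ` parts A w (n - c * ?k)"
  have eq: "parts (insert a A) w n = (\<Union>c\<in>{0..n div ?k}. ?F c)"
  proof (intro equalityI subsetI)
    fix M assume M: "M \<in> parts (insert a A) w n"
    define c where "c = count M a"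
    define M' where "M' = filter_mset (\<lambda>x. x \<noteq> a) M"
    have MM: "M = replicate_mset c a + M'"
      unfolding c_def M'_def by (metis filter_eq_replicate_mset multiset_partition)
    have sM': "set_mset M' \<subseteq> A" using M unfolding parts_def M'_def by auto
    have "sum_mset (image_mset w M) = c * ?k + sum_mset (image_mset w M')"
      by (subst MM) simp
    then have sw: "c * ?k + sum_mset (image_mset w M') = n" using M by (simp add: parts_def)
    then have "c * ?k \<le> n" by linarith
    then have "c \<le> n div ?k" using k by (metis div_le_mono nonzero_mult_div_cancel_right not_gr0)
    moreover have "M' \<in> parts A w (n - c * ?k)" using sM' sw by (auto simp: parts_def)
    ultimately show "M \<in> (\<Union>c\<in>{0..n div ?k}. ?F c)" using MM by auto
  next
    fix M assume "M \<in> (\<Union>c\<in>{0..n div ?k}. ?F c)"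
    then obtain c M' where c: "c \<le> n div ?k" and M': "M' \<in> parts A w (n - c * ?k)"
      and MM: "M = replicate_mset c a + M'" by auto
    have "c * ?k \<le> n" using c k by (metis div_times_less_eq_dividend le_trans mult_le_mono1)
    then show "M \<in> parts (insert a A) w n"
      using M' MM by (auto simp: parts_def)
  qed
  have fin: "\<And>c. finite (parts A w (n - c * ?k))" using insert.IH A by blast
  have inj: "\<And>c. inj_on (\<lambda>M. replicate_mset c a + M) (parts A w (n - c * ?k))"
    by (auto simp: inj_on_def)
  have disj: "\<And>c c'. c \<noteq> c' \<Longrightarrow> ?F c \<inter> ?F c' = {}"
  proof -
    fix c c' :: nat assume "c \<noteq> c'"
    { fix M1 M2 assume "M1 \<in> parts A w (n - c * ?k)" "M2 \<in> parts A w (n - c' * ?k)"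
        "replicate_mset c a + M1 = replicate_mset c' a + M2"
      then have "count (replicate_mset c a + M1) a = count (replicate_mset c' a + M2) a" by simp
      moreover have "count M1 a = 0" "count M2 a = 0"
        using \<open>M1 \<in> _\<close> \<open>M2 \<in> _\<close> insert.hyps by (auto simp: parts_def count_eq_zero_iff)
      ultimately have "c = c'" by simp }
    then show "?F c \<inter> ?F c' = {}" using \<open>c \<noteq> c'\<close> by blast
  qed
  have finU: "finite (parts (insert a A) w n)" unfolding eq using fin by auto
  have "card (parts (insert a A) w n) = (\<Sum>c=0..n div ?k. card (?F c))"
    unfolding eq by (rule card_UN_disjoint) (use fin disj in auto)
  also have "\<dots> = (\<Sum>c=0..n div ?k. card (parts A w (n - c * ?k)))"
    using inj by (simp add: card_image)
  finally have "int (card (parts (insert a A) w n)) = (\<Sum>c=0..n div ?k. (\<Prod>a\<in>A. G (w a)) $ (n - c * ?k))"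
    using insert.IH A by simp
  also have "\<dots> = (G ?k * (\<Prod>a\<in>A. G (w a))) $ n" using G_mult_nth[OF k] by simp
  also have "\<dots> = (\<Prod>a\<in>insert a A. G (w a)) $ n" using insert.hyps by simp
  finally show ?case using finU by simp
qed

definition Kset :: "nat \<Rightarrow> nat \<Rightarrow> nat set" where
  "Kset t D = {j \<in> {1..D}. \<not> 3 dvd j \<and> \<not> (2 * t) dvd j}"

definition BB :: "nat \<Rightarrow> nat \<Rightarrow> int fps" where
  "BB t D = (\<Prod>j\<in>Kset t D. G j)"

lemma finite_Kset: "finite (Kset t D)" by (simp add: Kset_def)

lemma b_part_eq:
  assumes nD: "n \<le> D"
  shows "int (b_part 2 3 (2 * t) n) = (BB t D * BB t D) $ n"
proof -
  let ?A = "Kset t D \<times> {0::nat, 1}"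
  have eq: "colored_partitions_avoiding 2 3 (2 * t) n = parts ?A fst n"
  proof (intro equalityI subsetI)
    fix M assume M: "M \<in> colored_partitions_avoiding 2 3 (2 * t) n"
    have "set_mset M \<subseteq> ?A"
    proof
      fix x assume x: "x \<in> set_mset M"
      have "fst x \<le> n" using M x mem_le_sum_mset[of x M fst]
        by (auto simp: colored_partitions_avoiding_def)
      then show "x \<in> ?A" using M x nD
        by (cases x) (auto simp: colored_partitions_avoiding_def Kset_def)
    qed
    then show "M \<in> parts ?A fst n" using M
      by (auto simp: parts_def colored_partitions_avoiding_def)
  next
    fix M assume M: "M \<in> parts ?A fst n"
    then show "M \<in> colored_partitions_avoiding 2 3 (2 * t) n"
      by (auto simp: parts_def colored_partitions_avoiding_def Kset_def)
  qed
  have fA: "finite ?A" using finite_Kset by simp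
  have pos: "\<forall>a\<in>?A. fst a > 0" by (auto simp: Kset_def)
  have "int (b_part 2 3 (2 * t) n) = (\<Prod>a\<in>?A. G (fst a)) $ n"
    using count_parts[OF fA pos, of n] eq by (simp add: b_part_def)
  also have "(\<Prod>a\<in>?A. G (fst a)) = (\<Prod>(j,c)\<in>?A. G j)"
    by (intro prod.cong) auto
  also have "\<dots> = (\<Prod>j\<in>Kset t D. \<Prod>c\<in>{0::nat,1}. G j)"
    by (rule prod.cartesian_product[symmetric])
  also have "\<dots> = BB t D * BB t D"
    by (simp add: BB_def prod.distrib)
  finally show ?thesis .
qed

lemma div_parity:
  assumes m: "m > (0::nat)"
  shows "2 dvd int (card {d. d dvd m}) - (if \<exists>r. m = r * r then 1 else 0)"
proof -
  let ?A = "{d. d dvd m}"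
  have fin: "finite ?A" using m by (simp add: finite_divisors_nat)
  have h: "2 dvd (\<Sum>d\<in>?A. (1::int)) - (\<Sum>d\<in>{d\<in>?A. m div d = d}. 1)"
  proof (rule inv_sum_dvd[OF fin])
    show "\<forall>x\<in>?A. m div x \<in> ?A \<and> m div (m div x) = x"
    proof
      fix x assume "x \<in> ?A"
      then obtain k where k: "m = x * k" by auto
      then have "x > 0" "k > 0" using m by auto
      then show "m div x \<in> ?A \<and> m div (m div x) = x" using k by simp
    qed
  qed auto
  have fx: "{d\<in>?A. m div d = d} = (if \<exists>r. m = r * r then {THE r. m = r * r} else {})"
  proof (cases "\<exists>r. m = r * r")
    case True
    then obtain r where r: "m = r * r" by blast
    have uniq: "\<And>s. m = s * s \<Longrightarrow> s = r"
    proof -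
      fix s assume s: "m = s * s"
      show "s = r"
      proof (rule ccontr)
        assume "s \<noteq> r"
        then have "s < r \<or> r < s" by arith
        then have "s * s < r * r \<or> r * r < s * s" by (auto intro: mult_strict_mono)
        then show False using r s by simp
      qed
    qed
    have the: "(THE r. m = r * r) = r" using r uniq by blast
    have "{d\<in>?A. m div d = d} = {r}"
    proof (intro equalityI subsetI)
      fix d assume "d \<in> {d\<in>?A. m div d = d}"
      then have "d dvd m" "m div d = d" by auto
      then have "m = d * d" by (metis dvd_mult_div_cancel)
      then show "d \<in> {r}" using uniq by auto
    next
      fix d assume "d \<in> {r}"
      then show "d \<in> {d\<in>?A. m div d = d}" using r m by auto
    qed
    then show ?thesis using True the by simp
  next
    case False
    have "{d\<in>?A. m div d = d} = {}"
    proof -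
      { fix d assume "d dvd m" "m div d = d"
        then have "m = d * d" by (metis dvd_mult_div_cancel)
        with False have False by blast }
      then show ?thesis by blast
    qed
    then show ?thesis using False by simp
  qed
  show ?thesis using h unfolding fx by (auto split: if_splits)
qed

definition tri :: "nat \<Rightarrow> nat" where "tri a = a * (a + 1) div 2"

lemma tri_8: "8 * tri a + 1 = (2 * a + 1) * (2 * a + 1)"
proof -
  have "even (a * (a + 1))" by simp
  then have h: "2 * tri a = a * (a + 1)" unfolding tri_def by simp
  have "8 * tri a + 1 = 4 * (2 * tri a) + 1" by simp
  also have "\<dots> = 4 * (a * (a + 1)) + 1" using h by simp
  also have "\<dots> = (2 * a + 1) * (2 * a + 1)" by (simp add: algebra_simps)
  finally show ?thesis .
qed

lemma odd_square_iff:
  assumes "odd (m::nat)"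
  shows "(\<exists>r. m = r * r) \<longleftrightarrow> (\<exists>a. m = 8 * tri a + 1)"
proof
  assume "\<exists>r. m = r * r"
  then obtain r where r: "m = r * r" by blast
  then have "odd r" using assms by auto
  then obtain a where "r = 2 * a + 1" by (metis oddE)
  then show "\<exists>a. m = 8 * tri a + 1" using r tri_8 by metis
next
  assume "\<exists>a. m = 8 * tri a + 1"
  then show "\<exists>r. m = r * r" using tri_8 by metis
qed

lemma odd_3square_iff:
  assumes "odd (m::nat)"
  shows "(3 dvd m \<and> (\<exists>r. m div 3 = r * r)) \<longleftrightarrow> (\<exists>a. m = 24 * tri a + 3)"
proof
  assume "3 dvd m \<and> (\<exists>r. m div 3 = r * r)"
  then obtain r where r: "m = 3 * (r * r)" by auto
  then have "odd r" using assms by auto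
  then obtain a where "r = 2 * a + 1" by (metis oddE)
  then have "m = 3 * (8 * tri a + 1)" using r tri_8 by metis
  then show "\<exists>a. m = 24 * tri a + 3" by auto
next
  assume "\<exists>a. m = 24 * tri a + 3"
  then obtain a where "m = 24 * tri a + 3" by blast
  then have "m = 3 * (8 * tri a + 1)" by simp
  then have m3: "m = 3 * ((2 * a + 1) * (2 * a + 1))" using tri_8 by metis
  then have "m div 3 = (2 * a + 1) * (2 * a + 1)" by simp
  moreover have "3 dvd m" using m3 by simp
  ultimately show "3 dvd m \<and> (\<exists>r. m div 3 = r * r)" by blast
qed

definition psi :: "int fps" where
  "psi = Abs_fps (\<lambda>i. if \<exists>a. i = tri a then 1 else 0)"

definition ZZ :: "int fps" where
  "ZZ = dil 4 psi + fps_X * dil 12 psi"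

definition TT :: "int fps" where
  "TT = fps_X * dil 2 ZZ"

definition SS :: "nat \<Rightarrow> nat \<Rightarrow> int fps" where
  "SS t D = (\<Sum>j\<in>Kset t D. gg j)"

lemma dil_psi_nth:
  assumes c: "c > 0"
  shows "dil c psi $ k = (if \<exists>a. k = c * tri a then 1 else 0)"
proof (cases "c dvd k")
  case True
  then obtain q where q: "k = c * q" by blast
  have "(\<exists>a. q = tri a) \<longleftrightarrow> (\<exists>a. k = c * tri a)" using q c by auto
  then show ?thesis using q c by (simp add: dil_nth psi_def)
next
  case False
  then have "\<not> (\<exists>a. k = c * tri a)" by auto
  then show ?thesis using False by (simp add: dil_nth)
qed

lemma TT_nth:
  assumes n: "odd n"
  shows "TT $ n = (if \<exists>a. n = 8 * tri a + 1 then 1 else 0) + (if \<exists>a. n = 24 * tri a + 3 then 1 else 0)"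
proof -
  obtain k where k: "n = 2 * k + 1" using n by (metis oddE)
  have "TT $ n = ZZ $ k" using k by (simp add: TT_def dil_nth)
  also have "\<dots> = dil 4 psi $ k + (if k = 0 then 0 else dil 12 psi $ (k - 1))"
    by (simp add: ZZ_def)
  also have "dil 4 psi $ k = (if \<exists>a. n = 8 * tri a + 1 then 1 else 0)"
    using k by (simp add: dil_psi_nth)
  also have "(if k = 0 then 0 else dil 12 psi $ (k - 1)) = (if \<exists>a. n = 24 * tri a + 3 then 1 else 0)"
  proof (cases "k = 0")
    case True
    then show ?thesis using k by auto
  next
    case False
    have "(\<exists>a. k - 1 = 12 * tri a) \<longleftrightarrow> (\<exists>a. n = 24 * tri a + 3)"
    proof
      assume "\<exists>a. k - 1 = 12 * tri a"
      then obtain a where "k - 1 = 12 * tri a" by blast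
      then have "n = 24 * tri a + 3" using k False by simp
      then show "\<exists>a. n = 24 * tri a + 3" by blast
    next
      assume "\<exists>a. n = 24 * tri a + 3"
      then obtain a where "n = 24 * tri a + 3" by blast
      then have "k - 1 = 12 * tri a" using k by simp
      then show "\<exists>a. k - 1 = 12 * tri a" by blast
    qed
    then show ?thesis using False by (simp add: dil_psi_nth)
  qed
  finally show ?thesis .
qed

lemma SS_nth:
  assumes n: "odd n" "n \<le> D"
  shows "SS t D $ n = int (card {j. j dvd n \<and> \<not> 3 dvd j})"
proof -
  have n0: "n > 0" using n by (cases n) auto
  have "SS t D $ n = (\<Sum>j\<in>Kset t D. gg j $ n)" by (simp add: SS_def fps_sum_nth)
  also have "\<dots> = (\<Sum>j\<in>Kset t D. if j dvd n then 1 else 0)" using n0 by (simp add: gg_nth)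
  also have "\<dots> = int (card (Kset t D \<inter> {j. j dvd n}))"
    by (simp add: sum.If_cases finite_Kset)
  also have "Kset t D \<inter> {j. j dvd n} = {j. j dvd n \<and> \<not> 3 dvd j}"
  proof (intro equalityI subsetI)
    fix j assume "j \<in> {j. j dvd n \<and> \<not> 3 dvd j}"
    then have j: "j dvd n" "\<not> 3 dvd j" by auto
    have "j \<ge> 1" "j \<le> n" using j n0 by (auto intro: dvd_imp_le simp: Suc_le_eq intro!: Nat.gr0I)
    moreover have "\<not> (2 * t) dvd j"
    proof
      assume "(2 * t) dvd j"
      then have "2 dvd n" using j by (meson dvd_mult_left dvd_trans)
      then show False using n by simp
    qed
    ultimately show "j \<in> Kset t D \<inter> {j. j dvd n}" using j n by (auto simp: Kset_def)
  qed (auto simp: Kset_def)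
  finally show ?thesis .
qed

lemma card_div_not3:
  assumes n: "n > (0::nat)"
  shows "int (card {j. j dvd n \<and> \<not> 3 dvd j}) =
     int (card {d. d dvd n}) - (if 3 dvd n then int (card {d. d dvd n div 3}) else 0)"
proof -
  have fin: "finite {d. d dvd n}" using n by (simp add: finite_divisors_nat)
  have split: "{d. d dvd n} = {j. j dvd n \<and> \<not> 3 dvd j} \<union> {j. j dvd n \<and> 3 dvd j}" by auto
  have "card {d. d dvd n} = card {j. j dvd n \<and> \<not> 3 dvd j} + card {j. j dvd n \<and> 3 dvd j}"
    by (subst split, rule card_Un_disjoint) (use fin in auto)
  moreover have "card {j. j dvd n \<and> 3 dvd j} = (if 3 dvd n then card {d. d dvd n div 3} else 0)"
  proof (cases "3 dvd n")
    case True
    have "{j. j dvd n \<and> 3 dvd j} = (\<lambda>d. 3 * d) ` {d. d dvd n div 3}"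
    proof (intro equalityI subsetI)
      fix j assume "j \<in> {j. j dvd n \<and> 3 dvd j}"
      then obtain d where d: "j = 3 * d" "3 * d dvd n" by auto
      then have "d dvd n div 3" using True by (metis dvd_div_iff_mult mult.commute nat_mult_dvd_cancel_disj zero_neq_numeral dvd_mult_div_cancel)
      then show "j \<in> (\<lambda>d. 3 * d) ` {d. d dvd n div 3}" using d by auto
    next
      fix j assume "j \<in> (\<lambda>d. 3 * d) ` {d. d dvd n div 3}"
      then obtain d where d: "j = 3 * d" "d dvd n div 3" by auto
      then have "3 * d dvd n" using True by (metis dvd_mult_div_cancel mult_dvd_mono dvd_refl)
      then show "j \<in> {j. j dvd n \<and> 3 dvd j}" using d by auto
    qed
    then show ?thesis using True by (simp add: card_image inj_on_def)
  next
    case False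
    then have e: "{j. j dvd n \<and> 3 dvd j} = {}" by (blast intro: dvd_trans)
    show ?thesis unfolding e using False by simp
  qed
  ultimately show ?thesis by simp
qed

lemma SS_TT:
  assumes n: "odd n" "n \<le> D"
  shows "2 dvd SS t D $ n - TT $ n"
proof -
  have n0: "n > 0" using n by (cases n) auto
  have h1: "2 dvd int (card {d. d dvd n}) - (if \<exists>r. n = r * r then 1 else 0)"
    using div_parity[OF n0] .
  have h2: "3 dvd n \<Longrightarrow> 2 dvd int (card {d. d dvd n div 3}) - (if \<exists>r. n div 3 = r * r then 1 else 0)"
    using div_parity[of "n div 3"] n0 by (metis dvd_div_eq_0_iff not_gr0)
  have e1: "(\<exists>r. n = r * r) \<longleftrightarrow> (\<exists>a. n = 8 * tri a + 1)" using odd_square_iff n by blast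
  have e2: "(3 dvd n \<and> (\<exists>r. n div 3 = r * r)) \<longleftrightarrow> (\<exists>a. n = 24 * tri a + 3)"
    using odd_3square_iff n by blast
  have "SS t D $ n - TT $ n =
      (int (card {d. d dvd n}) - (if 3 dvd n then int (card {d. d dvd n div 3}) else 0))
      - ((if \<exists>r. n = r * r then 1 else 0) + (if 3 dvd n \<and> (\<exists>r. n div 3 = r * r) then 1 else 0))"
    using SS_nth[OF n, of t] card_div_not3[OF n0] TT_nth[OF n(1)] e1 e2 by simp
  also have "2 dvd \<dots>"
  proof (cases "3 dvd n")
    case True
    have "2 dvd (int (card {d. d dvd n}) - (if \<exists>r. n = r * r then 1 else 0)) -
       (int (card {d. d dvd n div 3}) - (if \<exists>r. n div 3 = r * r then 1 else 0))"
      using h1 h2[OF True] by (rule dvd_diff)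
    then show ?thesis using True by (simp add: algebra_simps)
  next
    case False
    then show ?thesis using h1 by simp
  qed
  finally show ?thesis .
qed

lemma tri2: "2 * tri a = a * (a + 1)"
proof -
  have "even (a * (a + 1))" by simp
  then show ?thesis unfolding tri_def by simp
qed

lemma tri_inj: "tri a = tri b \<Longrightarrow> a = b"
proof (rule ccontr)
  assume e: "tri a = tri b" and ne: "a \<noteq> b"
  then have "a < b \<or> b < a" by arith
  moreover have m: "\<And>u v :: nat. u < v \<Longrightarrow> u * (u + 1) < v * (v + 1)"
    by (rule mult_strict_mono) auto
  ultimately have "a * (a + 1) < b * (b + 1) \<or> b * (b + 1) < a * (a + 1)"
    by blast
  then show False using e tri2[of a] tri2[of b] by simp
qed

lemma psi_nth: "psi $ i = (if \<exists>a. i = tri a then 1 else 0)"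
  by (simp add: psi_def)

lemma coeff_R:
  "(psi * dil 3 psi) $ n = int (card {(a, b). tri a + 3 * tri b = n})"
proof -
  let ?I = "{i\<in>{0..n}. (\<exists>a. i = tri a) \<and> (\<exists>b. n - i = 3 * tri b)}"
  have "(psi * dil 3 psi) $ n = (\<Sum>i=0..n. psi $ i * dil 3 psi $ (n - i))"
    by (simp add: fps_mult_nth)
  also have "\<dots> = (\<Sum>i=0..n. if (\<exists>a. i = tri a) \<and> (\<exists>b. n - i = 3 * tri b) then 1 else 0)"
    by (intro sum.cong) (auto simp: psi_nth dil_psi_nth)
  also have "\<dots> = int (card ?I)"
    by (simp add: sum.If_cases Int_def)
  also have "card ?I = card {(a, b). tri a + 3 * tri b = n}"
  proof (rule sym, rule bij_betw_same_card)
    show "bij_betw (\<lambda>(a, b). tri a) {(a, b). tri a + 3 * tri b = n} ?I"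
    proof (rule bij_betwI')
      fix p q assume p: "p \<in> {(a, b). tri a + 3 * tri b = n}" and q: "q \<in> {(a, b). tri a + 3 * tri b = n}"
      obtain a b where pab: "p = (a, b)" by force
      obtain a' b' where qab: "q = (a', b')" by force
      show "((\<lambda>(a, b). tri a) p = (\<lambda>(a, b). tri a) q) = (p = q)"
      proof
        assume "(\<lambda>(a, b). tri a) p = (\<lambda>(a, b). tri a) q"
        then have "tri a = tri a'" using pab qab by simp
        moreover then have "tri b = tri b'" using p q pab qab by simp
        ultimately show "p = q" using pab qab tri_inj by blast
      qed simp
    next
      fix p assume "p \<in> {(a, b). tri a + 3 * tri b = n}"
      then show "(\<lambda>(a, b). tri a) p \<in> ?I" by auto
    next
      fix i assume "i \<in> ?I"
      then obtain a b where "i = tri a" "n - i = 3 * tri b" "i \<le> n" by auto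
      then show "\<exists>p\<in>{(a, b). tri a + 3 * tri b = n}. i = (\<lambda>(a, b). tri a) p"
        by (intro bexI[of _ "(a, b)"]) auto
    qed
  qed
  finally show ?thesis .
qed

definition Qset :: "int \<Rightarrow> (int \<times> int) set" where
  "Qset M = {(x, y). x > 0 \<and> y > 0 \<and> odd x \<and> odd y \<and> x * x + 3 * y * y = 4 * M}"

definition Sset :: "int \<Rightarrow> (int \<times> int) set" where
  "Sset M = {(X, Y). X * X + 3 * Y * Y = M}"

definition Spset :: "int \<Rightarrow> (int \<times> int) set" where
  "Spset M = {(X, Y). X * X + 3 * Y * Y = M \<and> X + 3 * Y > 0}"

definition Shset :: "int \<Rightarrow> (int \<times> int) set" where
  "Shset M = {(X, Y). X * X + 3 * Y * Y = M \<and> (X > 0 \<or> (X = 0 \<and> Y > 0))}"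

lemma tri_int: "(2 * int a + 1) * (2 * int a + 1) = 8 * int (tri a) + 1"
proof -
  have "int (8 * tri a + 1) = int ((2 * a + 1) * (2 * a + 1))" using tri_8 by metis
  then show ?thesis by (simp add: algebra_simps)
qed

lemma card_R_Q:
  "card {(a, b). tri a + 3 * tri b = n} = card (Qset (2 * int n + 1))"
proof (rule bij_betw_same_card)
  let ?f = "\<lambda>(a::nat, b::nat). (2 * int a + 1, 2 * int b + 1)"
  let ?g = "\<lambda>(x::int, y::int). (nat (x div 2), nat (y div 2))"
  show "bij_betw ?f {(a, b). tri a + 3 * tri b = n} (Qset (2 * int n + 1))"
  proof (rule bij_betw_byWitness[where f' = ?g])
    show "\<forall>p\<in>{(a, b). tri a + 3 * tri b = n}. ?g (?f p) = p" by auto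
    show "\<forall>q\<in>Qset (2 * int n + 1). ?f (?g q) = q"
    proof
      fix q assume "q \<in> Qset (2 * int n + 1)"
      then obtain x y where q: "q = (x, y)" "x > 0" "y > 0" "odd x" "odd y"
        by (auto simp: Qset_def)
      have "2 * int (nat (x div 2)) + 1 = x" using q by (auto elim!: oddE)
      moreover have "2 * int (nat (y div 2)) + 1 = y" using q by (auto elim!: oddE)
      ultimately show "?f (?g q) = q" using q by simp
    qed
    show "?f ` {(a, b). tri a + 3 * tri b = n} \<subseteq> Qset (2 * int n + 1)"
    proof
      fix q assume "q \<in> ?f ` {(a, b). tri a + 3 * tri b = n}"
      then obtain a b where q: "q = ?f (a, b)" and ab: "tri a + 3 * tri b = n" by auto
      have "(2 * int a + 1) * (2 * int a + 1) + 3 * (2 * int b + 1) * (2 * int b + 1)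
          = 8 * (int (tri a) + 3 * int (tri b)) + 4"
        using tri_int[of a] tri_int[of b] by (simp add: algebra_simps)
      also have "\<dots> = 4 * (2 * int n + 1)" using ab by (simp flip: of_nat_add of_nat_mult)
      finally show "q \<in> Qset (2 * int n + 1)" using q by (auto simp: Qset_def)
    qed
    show "?g ` Qset (2 * int n + 1) \<subseteq> {(a, b). tri a + 3 * tri b = n}"
    proof
      fix p assume "p \<in> ?g ` Qset (2 * int n + 1)"
      then obtain x y where p: "p = ?g (x, y)" and xy: "(x, y) \<in> Qset (2 * int n + 1)" by auto
      obtain a where a: "x = 2 * int a + 1"
        using xy by (auto simp: Qset_def elim!: oddE) (metis nonneg_int_cases)
      obtain b where b: "y = 2 * int b + 1"
        using xy by (auto simp: Qset_def elim!: oddE) (metis nonneg_int_cases)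
      have "8 * (int (tri a) + 3 * int (tri b)) + 4 = 4 * (2 * int n + 1)"
        using xy a b tri_int[of a] tri_int[of b] by (simp add: Qset_def algebra_simps)
      then have "int (tri a + 3 * tri b) = int n" by simp
      then have "tri a + 3 * tri b = n" by (simp only: of_nat_eq_iff)
      moreover have "p = (a, b)" using p a b by simp
      ultimately show "p \<in> {(a, b). tri a + 3 * tri b = n}" by simp
    qed
  qed
qed

lemma odd_norm:
  fixes X Y M :: int
  assumes "X * X + 3 * Y * Y = M" "odd M"
  shows "odd (X + Y)"
proof -
  have "X * X + 3 * Y * Y = (X + Y) + (X * (X - 1) + Y * (3 * Y - 1))" by (simp add: algebra_simps)
  moreover have "even (X * (X - 1))" by simp
  moreover have "even (Y * (3 * Y - 1))"
  proof (cases "even Y")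
    case False then have "even (3 * Y - 1)" by simp
    then show ?thesis by simp
  qed simp
  ultimately show ?thesis using assms by auto
qed

lemma four_dvd_sum:
  fixes x y :: int
  assumes "odd x" "odd y" "\<not> 4 dvd (x - y)"
  shows "4 dvd (x + y)"
proof -
  have "\<not> 2 dvd x" "\<not> 2 dvd y" using assms by auto
  then show ?thesis using assms(3) by presburger
qed

lemma card_Q_Sp:
  assumes M: "odd M"
  shows "card (Qset M) = card (Spset M)"
proof (rule bij_betw_same_card)
  define f1 :: "int \<times> int \<Rightarrow> int \<times> int" where
    "f1 = (\<lambda>(x, y). if 4 dvd (x - y) then (y + (x - y) div 4, (x - y) div 4)
                    else ((x + y) div 4 - y, (x + y) div 4))"
  define f2 :: "int \<times> int \<Rightarrow> int \<times> int" where
    "f2 = (\<lambda>(X, Y). (X + 3 * Y, \<bar>X - Y\<bar>))"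
  show "bij_betw f1 (Qset M) (Spset M)"
  proof (rule bij_betw_byWitness[where f' = f2])
    show "\<forall>q\<in>Qset M. f2 (f1 q) = q"
    proof
      fix q assume "q \<in> Qset M"
      then obtain x y where q: "q = (x, y)" "x > 0" "y > 0" "odd x" "odd y"
        by (auto simp: Qset_def)
      show "f2 (f1 q) = q"
      proof (cases "4 dvd (x - y)")
        case True
        then obtain k where k: "x - y = 4 * k" by blast
        then show ?thesis using q True by (simp add: f1_def f2_def)
      next
        case False
        then obtain k where k: "x + y = 4 * k"
          using q four_dvd_sum by blast
        then show ?thesis using q False by (simp add: f1_def f2_def)
      qed
    qed
    show "\<forall>p\<in>Spset M. f1 (f2 p) = p"
    proof
      fix p assume "p \<in> Spset M"
      then obtain X Y where p: "p = (X, Y)" "X * X + 3 * Y * Y = M" by (auto simp: Spset_def)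
      have oXY: "odd (X + Y)" using odd_norm[OF p(2) M] .
      show "f1 (f2 p) = p"
      proof (cases "X - Y > 0")
        case True
        have "X + 3 * Y - (X - Y) = 4 * Y" by simp
        then show ?thesis using True p by (simp add: f1_def f2_def)
      next
        case False
        have ne: "\<not> 4 dvd (X + 3 * Y - (Y - X))"
        proof
          assume "4 dvd (X + 3 * Y - (Y - X))"
          moreover have "X + 3 * Y - (Y - X) = 2 * (X + Y)" by simp
          ultimately obtain k where "2 * (X + Y) = 4 * k" by (metis dvdE)
          then have "X + Y = 2 * k" by simp
          then have "2 dvd (X + Y)" by simp
          then show False using oXY by simp
        qed
        have e: "X + 3 * Y + (Y - X) = 4 * Y" by simp
        then show ?thesis using False p ne by (simp add: f1_def f2_def)
      qed
    qed
    show "f1 ` Qset M \<subseteq> Spset M"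
    proof
      fix p assume "p \<in> f1 ` Qset M"
      then obtain x y where p: "p = f1 (x, y)" and q: "x > 0" "y > 0" "odd x" "odd y"
        "x * x + 3 * y * y = 4 * M" by (auto simp: Qset_def)
      show "p \<in> Spset M"
      proof (cases "4 dvd (x - y)")
        case True
        then obtain k where k: "x - y = 4 * k" by blast
        then have xk: "x = y + 4 * k" by simp
        have "4 * ((y + k) * (y + k) + 3 * k * k) = 4 * M" using q(5) unfolding xk
          by (simp add: algebra_simps)
        then have "(y + k) * (y + k) + 3 * k * k = M" by simp
        moreover have "y + k + 3 * k > 0" using q xk by simp
        ultimately show ?thesis using p True k by (simp add: f1_def Spset_def)
      next
        case False
        then obtain k where k: "x + y = 4 * k"
          using q four_dvd_sum by blast
        then have xk: "x = 4 * k - y" by simp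
        have "4 * ((k - y) * (k - y) + 3 * k * k) = 4 * M" using q(5) unfolding xk
          by (simp add: algebra_simps)
        then have "(k - y) * (k - y) + 3 * k * k = M" by simp
        moreover have "k - y + 3 * k > 0" using q xk by simp
        ultimately show ?thesis using p False k by (simp add: f1_def Spset_def)
      qed
    qed
    show "f2 ` Spset M \<subseteq> Qset M"
    proof
      fix q assume "q \<in> f2 ` Spset M"
      then obtain X Y where q: "q = f2 (X, Y)" and p: "X * X + 3 * Y * Y = M" "X + 3 * Y > 0"
        by (auto simp: Spset_def)
      have oXY: "odd (X + Y)" using odd_norm[OF p(1) M] .
      have "X - Y = (X + Y) - 2 * Y" by simp
      then have o1: "odd (X - Y)" using oXY by simp
      have "X + 3 * Y = (X - Y) + 2 * (2 * Y)" by simp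
      then have o2: "odd (X + 3 * Y)" using o1 by simp
      have "(X + 3 * Y) * (X + 3 * Y) + 3 * \<bar>X - Y\<bar> * \<bar>X - Y\<bar> = 4 * M"
      proof -
        have "\<bar>X - Y\<bar> * \<bar>X - Y\<bar> = (X - Y) * (X - Y)" by (simp add: abs_mult_self_eq)
        then show ?thesis using p(1) by (simp add: algebra_simps)
      qed
      moreover have "X - Y \<noteq> 0" using o1 by auto
      then have "\<bar>X - Y\<bar> > 0" by simp
      moreover have "odd \<bar>X - Y\<bar>" using o1 by simp
      ultimately show "q \<in> Qset M" using q p o2 by (simp add: f2_def Qset_def)
    qed
  qed
qed

definition negp :: "int \<times> int \<Rightarrow> int \<times> int" where
  "negp p = (- fst p, - snd p)"

lemma half_card:
  assumes fin: "finite S" and neg: "\<forall>p\<in>S. negp p \<in> S \<and> negp p \<noteq> p"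
    and H: "H \<subseteq> S" and xor: "\<forall>p\<in>S. (p \<in> H \<longleftrightarrow> negp p \<notin> H)"
  shows "card S = 2 * card H"
proof -
  have nn: "\<And>p. negp (negp p) = p" by (simp add: negp_def)
  have eq: "S = H \<union> negp ` H"
  proof (intro equalityI subsetI)
    fix p assume p: "p \<in> S"
    show "p \<in> H \<union> negp ` H"
    proof (cases "p \<in> H")
      case False
      then have "negp p \<in> H" using xor p by auto
      then have "negp (negp p) \<in> negp ` H" by blast
      then show ?thesis using nn by simp
    qed simp
  next
    fix p assume "p \<in> H \<union> negp ` H"
    then show "p \<in> S" using H neg by auto
  qed
  have disj: "H \<inter> negp ` H = {}"
  proof -
    { fix q h assume q: "q \<in> H" "h \<in> H" "q = negp h"
      then have "negp q = h" using nn by simp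
      then have False using q xor H by auto }
    then show ?thesis by blast
  qed
  have finH: "finite H" using H fin finite_subset by blast
  have inj: "inj_on negp H" by (metis inj_onI nn)
  have "card S = card H + card (negp ` H)"
    unfolding eq by (rule card_Un_disjoint) (use finH disj in auto)
  also have "card (negp ` H) = card H" using inj by (simp add: card_image)
  finally show ?thesis by simp
qed

lemma abs_le_sq: "\<bar>x :: int\<bar> \<le> x * x"
proof (cases "x = 0")
  case False
  then have "1 \<le> \<bar>x\<bar>" by simp
  then have "\<bar>x\<bar> * 1 \<le> \<bar>x\<bar> * \<bar>x\<bar>" by (intro mult_left_mono) auto
  then show ?thesis by (simp add: abs_mult_self_eq)
qed simp

lemma finite_Sset: "finite (Sset M)"
proof -
  have "Sset M \<subseteq> {-\<bar>M\<bar>..\<bar>M\<bar>} \<times> {-\<bar>M\<bar>..\<bar>M\<bar>}"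
  proof
    fix p assume "p \<in> Sset M"
    then obtain X Y where p: "p = (X, Y)" "X * X + 3 * Y * Y = M" by (auto simp: Sset_def)
    have a: "X * X \<ge> 0" "Y * Y \<ge> 0" by auto
    have "\<bar>X\<bar> \<le> \<bar>M\<bar>" using abs_le_sq[of X] a p by linarith
    moreover have "\<bar>Y\<bar> \<le> \<bar>M\<bar>" using abs_le_sq[of Y] a p by linarith
    ultimately show "p \<in> {-\<bar>M\<bar>..\<bar>M\<bar>} \<times> {-\<bar>M\<bar>..\<bar>M\<bar>}" using p by auto
  qed
  then show ?thesis by (rule finite_subset) simp
qed

lemma card_Sp_Sh:
  assumes M: "odd M" "M > 0"
  shows "card (Spset M) = card (Shset M)"
proof -
  have neg: "\<forall>p\<in>Sset M. negp p \<in> Sset M \<and> negp p \<noteq> p"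
  proof
    fix p assume "p \<in> Sset M"
    then obtain X Y where p: "p = (X, Y)" "X * X + 3 * Y * Y = M" by (auto simp: Sset_def)
    have "(X, Y) \<noteq> (0, 0)" using p M by auto
    then have "(- X, - Y) \<noteq> (X, Y)" by auto
    then show "negp p \<in> Sset M \<and> negp p \<noteq> p" using p by (simp add: negp_def Sset_def)
  qed
  have c1: "card (Sset M) = 2 * card (Spset M)"
  proof (rule half_card[OF finite_Sset neg])
    show "Spset M \<subseteq> Sset M" by (auto simp: Spset_def Sset_def)
    show "\<forall>p\<in>Sset M. (p \<in> Spset M) = (negp p \<notin> Spset M)"
    proof
      fix p assume "p \<in> Sset M"
      then obtain X Y where p: "p = (X, Y)" "X * X + 3 * Y * Y = M" by (auto simp: Sset_def)
      have "X + 3 * Y \<noteq> 0"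
      proof
        assume "X + 3 * Y = 0"
        then have "X = - 3 * Y" by simp
        then have "M = 2 * (6 * Y * Y)" using p by (simp add: algebra_simps)
        then show False using M by simp
      qed
      then show "(p \<in> Spset M) = (negp p \<notin> Spset M)"
        using p by (auto simp: Spset_def negp_def)
    qed
  qed
  have c2: "card (Sset M) = 2 * card (Shset M)"
  proof (rule half_card[OF finite_Sset neg])
    show "Shset M \<subseteq> Sset M" by (auto simp: Shset_def Sset_def)
    show "\<forall>p\<in>Sset M. (p \<in> Shset M) = (negp p \<notin> Shset M)"
    proof
      fix p assume "p \<in> Sset M"
      then obtain X Y where p: "p = (X, Y)" "X * X + 3 * Y * Y = M" by (auto simp: Sset_def)
      have "(X, Y) \<noteq> (0, 0)" using p M by auto
      then show "(p \<in> Shset M) = (negp p \<notin> Shset M)"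
        using p by (auto simp: Shset_def negp_def)
    qed
  qed
  from c1 c2 show ?thesis by simp
qed

lemma pos_root_unique:
  fixes r s :: int
  assumes "r > 0" "s > 0" "r * r = s * s"
  shows "r = s"
proof (rule ccontr)
  assume "r \<noteq> s"
  then have "r < s \<or> s < r" by arith
  moreover have "r < s \<Longrightarrow> r * r < s * s" using assms by (intro mult_strict_mono) auto
  moreover have "s < r \<Longrightarrow> s * s < r * r" using assms by (intro mult_strict_mono) auto
  ultimately show False using assms by auto
qed

lemma card_Sh_parity:
  assumes M: "odd M" "M > 0"
  shows "2 dvd int (card (Shset M)) - ((if \<exists>r. r > 0 \<and> r * r = M then 1 else 0)
                                    + (if \<exists>r. r > 0 \<and> 3 * r * r = M then 1 else 0))"
proof -
  define f :: "int \<times> int \<Rightarrow> int \<times> int" where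
    "f = (\<lambda>(X, Y). if X > 0 then (X, - Y) else (X, Y))"
  have "Shset M \<subseteq> Sset M" by (auto simp: Shset_def Sset_def)
  then have finSh: "finite (Shset M)" using finite_Sset finite_subset by blast
  have h: "2 dvd (\<Sum>p\<in>Shset M. (1::int)) - (\<Sum>p\<in>{p\<in>Shset M. f p = p}. 1)"
    by (rule inv_sum_dvd[OF finSh]) (auto simp: f_def Shset_def)
  define A1 :: "(int \<times> int) set" where "A1 = {(X, Y). X > 0 \<and> Y = 0 \<and> X * X = M}"
  define A2 :: "(int \<times> int) set" where "A2 = {(X, Y). X = 0 \<and> Y > 0 \<and> 3 * Y * Y = M}"
  have fixeq: "{p\<in>Shset M. f p = p} = A1 \<union> A2"
    by (auto simp: f_def Shset_def A1_def A2_def)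
  have cA1: "card A1 = (if \<exists>r. r > 0 \<and> r * r = M then 1 else 0)"
  proof (cases "\<exists>r. r > 0 \<and> r * r = M")
    case True
    then obtain r where r: "r > 0" "r * r = M" by blast
    have "A1 = {(r, 0)}"
    proof (intro equalityI subsetI)
      fix p assume "p \<in> A1"
      then obtain X where p: "p = (X, 0)" "X > 0" "X * X = M" by (auto simp: A1_def)
      then have "X = r" using pos_root_unique[of X r] r by simp
      then show "p \<in> {(r, 0)}" using p by simp
    qed (use r in \<open>auto simp: A1_def\<close>)
    then show ?thesis using True by simp
  next
    case False
    then have "A1 = {}" by (auto simp: A1_def)
    then show ?thesis using False by simp
  qed
  have cA2: "card A2 = (if \<exists>r. r > 0 \<and> 3 * r * r = M then 1 else 0)"
  proof (cases "\<exists>r. r > 0 \<and> 3 * r * r = M")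
    case True
    then obtain r where r: "r > 0" "3 * r * r = M" by blast
    have "A2 = {(0, r)}"
    proof (intro equalityI subsetI)
      fix p assume "p \<in> A2"
      then obtain Y where p: "p = (0, Y)" "Y > 0" "3 * Y * Y = M" by (auto simp: A2_def)
      then have "Y * Y = r * r" using r by simp
      then have "Y = r" using pos_root_unique[of Y r] p r by simp
      then show "p \<in> {(0, r)}" using p by simp
    qed (use r in \<open>auto simp: A2_def\<close>)
    then show ?thesis using True by simp
  next
    case False
    then have "A2 = {}" by (auto simp: A2_def)
    then show ?thesis using False by simp
  qed
  have "A1 \<inter> A2 = {}" by (auto simp: A1_def A2_def)
  moreover have "A1 \<subseteq> Sset M" "A2 \<subseteq> Sset M" by (auto simp: A1_def A2_def Sset_def)
  then have "finite A1" "finite A2" using finite_Sset finite_subset by blast+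
  ultimately have "card (A1 \<union> A2) = card A1 + card A2" by (simp add: card_Un_disjoint)
  then show ?thesis using h fixeq cA1 cA2 by simp
qed

lemma ZZ_nth:
  "ZZ $ n = (if \<exists>a. n = 4 * tri a then 1 else 0) + (if n \<noteq> 0 \<and> (\<exists>a. n - 1 = 12 * tri a) then 1 else 0)"
  by (simp add: ZZ_def dil_psi_nth)

lemma sq_int_nat:
  assumes "m > (0::nat)"
  shows "(\<exists>r::int. r > 0 \<and> r * r = int m) \<longleftrightarrow> (\<exists>r. m = r * r)"
proof
  assume "\<exists>r::int. r > 0 \<and> r * r = int m"
  then obtain r :: int where r: "r > 0" "r * r = int m" by blast
  then have "int (nat r * nat r) = int m" by simp
  then show "\<exists>r. m = r * r" by (metis of_nat_eq_iff)
next
  assume "\<exists>r. m = r * r"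
  then obtain r where r: "m = r * r" by blast
  then have "r > 0" using assms by (cases r) auto
  then show "\<exists>r::int. r > 0 \<and> r * r = int m" using r by (intro exI[of _ "int r"]) simp
qed

lemma sq3_int_nat:
  assumes "m > (0::nat)"
  shows "(\<exists>r::int. r > 0 \<and> 3 * r * r = int m) \<longleftrightarrow> (3 dvd m \<and> (\<exists>r. m div 3 = r * r))"
proof
  assume "\<exists>r::int. r > 0 \<and> 3 * r * r = int m"
  then obtain r :: int where r: "r > 0" "3 * r * r = int m" by blast
  then have "int (3 * (nat r * nat r)) = int m" by simp
  then have "m = 3 * (nat r * nat r)" by (metis of_nat_eq_iff)
  then show "3 dvd m \<and> (\<exists>r. m div 3 = r * r)" by auto
next
  assume "3 dvd m \<and> (\<exists>r. m div 3 = r * r)"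
  then obtain r where r: "m = 3 * (r * r)" by (metis dvd_mult_div_cancel)
  then have "r > 0" using assms by (cases r) auto
  then show "\<exists>r::int. r > 0 \<and> 3 * r * r = int m" using r by (intro exI[of _ "int r"]) simp
qed

lemma P3: "2 dvd (psi * dil 3 psi) $ n - ZZ $ n"
proof -
  define m where "m = 2 * n + 1"
  define M where "M = 2 * int n + 1"
  have Mm: "M = int m" by (simp add: M_def m_def)
  have oM: "odd M" "M > 0" by (auto simp: M_def)
  have om: "odd m" "m > 0" by (auto simp: m_def)
  have "(psi * dil 3 psi) $ n = int (card (Shset M))"
    using coeff_R[of n] card_R_Q[of n] card_Q_Sp[OF oM(1)] card_Sp_Sh[OF oM] by (simp add: M_def)
  moreover have h: "2 dvd int (card (Shset M)) - ((if \<exists>r. r > 0 \<and> r * r = M then 1 else 0)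
                                    + (if \<exists>r. r > 0 \<and> 3 * r * r = M then 1 else 0))"
    using card_Sh_parity[OF oM] .
  moreover have e1: "(\<exists>r. r > 0 \<and> r * r = M) \<longleftrightarrow> (\<exists>a. n = 4 * tri a)"
  proof -
    have "(\<exists>r. r > 0 \<and> r * r = M) \<longleftrightarrow> (\<exists>r. m = r * r)" using sq_int_nat[OF om(2)] Mm by simp
    also have "\<dots> \<longleftrightarrow> (\<exists>a. m = 8 * tri a + 1)" using odd_square_iff[OF om(1)] .
    also have "\<dots> \<longleftrightarrow> (\<exists>a. n = 4 * tri a)" by (auto simp: m_def)
    finally show ?thesis .
  qed
  moreover have e2: "(\<exists>r. r > 0 \<and> 3 * r * r = M) \<longleftrightarrow> (n \<noteq> 0 \<and> (\<exists>a. n - 1 = 12 * tri a))"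
  proof -
    have "(\<exists>r. r > 0 \<and> 3 * r * r = M) \<longleftrightarrow> (3 dvd m \<and> (\<exists>r. m div 3 = r * r))"
      using sq3_int_nat[OF om(2)] Mm by simp
    also have "\<dots> \<longleftrightarrow> (\<exists>a. m = 24 * tri a + 3)" using odd_3square_iff[OF om(1)] .
    also have "\<dots> \<longleftrightarrow> (n \<noteq> 0 \<and> (\<exists>a. n - 1 = 12 * tri a))"
    proof
      assume "\<exists>a. m = 24 * tri a + 3"
      then obtain a where "m = 24 * tri a + 3" by blast
      then have "n = 12 * tri a + 1" by (simp add: m_def)
      then show "n \<noteq> 0 \<and> (\<exists>a. n - 1 = 12 * tri a)" by auto
    next
      assume "n \<noteq> 0 \<and> (\<exists>a. n - 1 = 12 * tri a)"
      then obtain a where "n \<noteq> 0" "n - 1 = 12 * tri a" by blast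
      then have "m = 24 * tri a + 3" by (simp add: m_def)
      then show "\<exists>a. m = 24 * tri a + 3" by blast
    qed
    finally show ?thesis .
  qed
  ultimately show ?thesis by (simp add: ZZ_nth)
qed

lemma cg_nth: "cg m D f g \<Longrightarrow> n \<le> D \<Longrightarrow> m dvd (f $ n - g $ n)"
  by (simp add: cg_def)

lemma prodG0: "finite A \<Longrightarrow> (\<Prod>j\<in>A. G j) $ 0 = 1"
  by (induction A rule: finite_induct) (simp_all add: G_nth)

lemma BB_sq:
  "BB t D * BB t D = dil 2 (BB t D) * (\<Prod>j\<in>Kset t D. 1 + fps_const 2 * gg j)"
proof -
  have "BB t D * BB t D = (\<Prod>j\<in>Kset t D. G j * G j)" by (simp add: BB_def prod.distrib)
  also have "\<dots> = (\<Prod>j\<in>Kset t D. dil 2 (G j) * (1 + fps_const 2 * gg j))"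
    by (intro prod.cong refl Gsq) (auto simp: Kset_def)
  also have "\<dots> = dil 2 (BB t D) * (\<Prod>j\<in>Kset t D. 1 + fps_const 2 * gg j)"
    by (simp add: prod.distrib BB_def dil_prod)
  finally show ?thesis .
qed

lemma BB_sq_cg: "cg 4 D' (BB t D * BB t D) (dil 2 (BB t D) * (1 + fps_const 2 * SS t D))"
  unfolding BB_sq SS_def by (intro cg_mult cg_refl prod4 finite_Kset)

lemma two_fps: "fps_const 2 * (h :: int fps) = h + h"
  by (rule fps_ext) (simp only: fps_mult_left_const_nth fps_add_nth mult_2)

lemma four_fps: "fps_const 4 * (h :: int fps) = h + h + h + h"
proof -
  have "fps_const (4::int) = fps_const 2 * fps_const 2" by (simp only: fps_const_mult) simp
  then have "fps_const 4 * h = fps_const 2 * (fps_const 2 * h)" by (simp only: mult.assoc)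
  also have "\<dots> = h + h + h + h" by (simp only: two_fps) (simp add: algebra_simps)
  finally show ?thesis .
qed

lemma evenf_Xsq: "evenf (fps_X ^ 2)"
  using evenf_dil[of fps_X] by (simp add: dil_X)

lemma main_mod4:
  fixes t n :: nat
  defines "N \<equiv> 4 * n + 3"
  shows "4 dvd (BB t N * BB t N) $ N"
proof -
  define D where "D = N"
  define B where "B = BB t D"
  define Y where "Y = dil 2 B"
  define S where "S = SS t D"
  define V where "V = B * ZZ"
  define E where "E = dil 4 psi * dil 4 psi + fps_X ^ 2 * (dil 12 psi * dil 12 psi)"
  define F where "F = dil 4 psi * dil 12 psi"
  have evY: "evenf Y" unfolding Y_def by (rule evenf_dil)
  have ev4: "evenf (dil 4 psi)" using evenf_dil[of "dil 2 psi"] by (simp add: dil_dil)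
  have ev12: "evenf (dil 12 psi)" using evenf_dil[of "dil 6 psi"] by (simp add: dil_dil)
  have evE: "evenf E" unfolding E_def
    by (intro evenf_add evenf_mult ev4 ev12 evenf_Xsq)
  have BBcg: "cg 4 D (B * B) (Y * (1 + fps_const 2 * S))"
    unfolding B_def Y_def S_def by (rule BB_sq_cg)
  have ST: "\<forall>k\<le>D. odd k \<longrightarrow> 2 dvd (S $ k - TT $ k)"
    unfolding S_def using SS_TT by blast
  have ZZsq: "ZZ * ZZ = E + fps_const 2 * (fps_X * F)"
    unfolding ZZ_def E_def F_def two_fps
    by (simp add: algebra_simps power2_eq_square)
  have Edil: "cg 2 D E (dil 2 ZZ)"
  proof -
    have "cg 2 D E (dil 2 (dil 4 psi) + fps_X ^ 2 * dil 2 (dil 12 psi))"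
      unfolding E_def by (intro cg_add cg_mult cg_refl frob)
    also have "dil 2 (dil 4 psi) + fps_X ^ 2 * dil 2 (dil 12 psi) = dil 2 ZZ"
      unfolding ZZ_def by (simp add: dil_add dil_mult dil_X)
    finally show ?thesis .
  qed
  have TE: "cg 2 D (TT * E) (fps_X * dil 4 ZZ)"
  proof -
    have "cg 2 D (TT * E) (TT * dil 2 ZZ)" by (intro cg_mult cg_refl Edil)
    moreover have "TT * dil 2 ZZ = fps_X * (dil 2 ZZ * dil 2 ZZ)" by (simp add: TT_def ac_simps)
    moreover have "cg 2 D (fps_X * (dil 2 ZZ * dil 2 ZZ)) (fps_X * dil 2 (dil 2 ZZ))"
      by (intro cg_mult cg_refl frob)
    moreover have "dil 2 (dil 2 ZZ) = dil 4 ZZ" by (simp add: dil_dil)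
    ultimately show ?thesis by (metis cg_trans)
  qed
  have XF: "cg 2 D (fps_X * F) (fps_X * dil 4 ZZ)"
  proof -
    have "F = dil 4 (psi * dil 3 psi)" unfolding F_def by (simp add: dil_mult dil_dil)
    moreover have "\<forall>D. cg 2 D (psi * dil 3 psi) ZZ" unfolding cg_def using P3 by blast
    then have "cg 2 D (dil 4 (psi * dil 3 psi)) (dil 4 ZZ)"
      using cg_dil[of 4 2 "psi * dil 3 psi" ZZ D] by simp
    ultimately show ?thesis by (metis cg_mult cg_refl)
  qed
  define W where "W = fps_X * F + S * E"
  have Wodd: "\<forall>k\<le>D. odd k \<longrightarrow> 2 dvd W $ k"
  proof (intro allI impI)
    fix k assume k: "k \<le> D" "odd k"
    have a: "2 dvd (S * E) $ k - (TT * E) $ k" by (rule oddconv2[OF evE ST k(2) k(1)])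
    have b: "2 dvd (TT * E) $ k - (fps_X * dil 4 ZZ) $ k" using cg_nth[OF TE k(1)] .
    have c: "2 dvd (fps_X * F) $ k - (fps_X * dil 4 ZZ) $ k" using cg_nth[OF XF k(1)] .
    have "W $ k = ((S * E) $ k - (TT * E) $ k) + ((TT * E) $ k - (fps_X * dil 4 ZZ) $ k)
                 + ((fps_X * F) $ k - (fps_X * dil 4 ZZ) $ k) + 2 * (fps_X * dil 4 ZZ) $ k"
      by (simp add: W_def)
    then show "2 dvd W $ k" using a b c by simp
  qed
  have VV: "cg 4 D (V * V) (Y * E + fps_const 2 * (Y * W))"
  proof -
    have e1: "V * V = (B * B) * (ZZ * ZZ)" by (simp add: V_def ac_simps)
    have c1: "cg 4 D ((B * B) * (ZZ * ZZ)) ((Y * (1 + fps_const 2 * S)) * (ZZ * ZZ))"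
      by (intro cg_mult cg_refl BBcg)
    have e2: "(Y * (1 + fps_const 2 * S)) * (ZZ * ZZ) =
        (Y * E + fps_const 2 * (Y * W)) + fps_const 4 * (Y * S * fps_X * F)"
      unfolding ZZsq W_def two_fps four_fps by (simp add: algebra_simps)
    have c2: "cg 4 D ((Y * E + fps_const 2 * (Y * W)) + fps_const 4 * (Y * S * fps_X * F))
                          ((Y * E + fps_const 2 * (Y * W)) + 0)"
      by (intro cg_add cg_refl cg_zero)
    have c3: "cg 4 D (V * V) ((Y * E + fps_const 2 * (Y * W)) + fps_const 4 * (Y * S * fps_X * F))"
      using c1 unfolding e1 e2 .
    show ?thesis using cg_trans[OF c3 c2] by simp
  qed
  have Vsq: "\<forall>i\<le>2 * n + 1. odd i \<longrightarrow> 4 dvd (V * V) $ i"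
  proof (intro allI impI)
    fix i assume i: "i \<le> 2 * n + 1" "odd i"
    then have iD: "i \<le> D" by (simp add: D_def N_def)
    have "(Y * E) $ i = 0" using evenf_mult[OF evY evE] i by (simp add: evenf_nth)
    moreover have "2 dvd (Y * W) $ i" by (rule oddconv1[OF evY Wodd i(2) iD])
    then have "4 dvd 2 * (Y * W) $ i" by (auto elim!: dvdE)
    moreover have "4 dvd (V * V) $ i - (Y * E + fps_const 2 * (Y * W)) $ i"
      using cg_nth[OF VV iD] .
    ultimately show "4 dvd (V * V) $ i" by (simp add: dvd_diff_commute) (metis dvd_add diff_add_cancel)
  qed
  have B0: "B $ 0 = 1" unfolding B_def BB_def by (rule prodG0[OF finite_Kset])
  have t0: "tri 0 = 0" by (simp add: tri_def)
  have Z0: "ZZ $ 0 = 1" using t0 by (auto simp: ZZ_nth)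
  have V0: "odd (V $ 0)" by (simp add: V_def B0 Z0)
  have Vodd: "2 dvd V $ (2 * n + 1)"
    using root_lemma[OF V0 Vsq] by simp
  have ND: "N \<le> D" by (simp add: D_def)
  have A1: "4 dvd (B * B) $ N - (Y * (1 + fps_const 2 * S)) $ N" using cg_nth[OF BBcg ND] .
  have "Y * (1 + fps_const 2 * S) = Y + fps_const 2 * (Y * S)" by (simp add: algebra_simps)
  moreover have "Y $ N = 0" using evY by (simp add: evenf_nth N_def)
  ultimately have A2: "(Y * (1 + fps_const 2 * S)) $ N = 2 * (S * Y) $ N" by (simp add: mult.commute)
  have A3: "2 dvd (S * Y) $ N - (TT * Y) $ N" by (rule oddconv2[OF evY ST]) (simp_all add: N_def D_def)
  have "TT * Y = fps_X * dil 2 V"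
    by (simp add: TT_def Y_def V_def dil_mult ac_simps)
  moreover have "(fps_X * dil 2 V) $ N = V $ (2 * n + 1)"
    by (simp add: N_def dil_nth)
  ultimately have A4: "(TT * Y) $ N = V $ (2 * n + 1)" by simp
  from A3 obtain c where c: "(S * Y) $ N - (TT * Y) $ N = 2 * c" by (elim dvdE)
  from Vodd obtain d where d: "V $ (2 * n + 1) = 2 * d" by (elim dvdE)
  have "2 * (S * Y) $ N = 4 * (c + d)" using c d A4 by simp
  then have "4 dvd (Y * (1 + fps_const 2 * S)) $ N" using A2 by simp
  then have "4 dvd (B * B) $ N" using A1 by (metis dvd_add diff_add_cancel)
  then show ?thesis by (simp add: B_def D_def)
qed

theorem mainTheorem2:
  fixes t n :: nat
  assumes "t > 0" and "\<not> (3 dvd t)" and "n > 0"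
  shows "b_part 2 3 (2 * t) (4 * n + 3) mod 4 = 0"
proof -
  have "int (b_part 2 3 (2 * t) (4 * n + 3)) = (BB t (4 * n + 3) * BB t (4 * n + 3)) $ (4 * n + 3)"
    by (rule b_part_eq) simp
  then have "4 dvd int (b_part 2 3 (2 * t) (4 * n + 3))" using main_mod4[of t n] by simp
  then have "4 dvd b_part 2 3 (2 * t) (4 * n + 3)" by presburger
  then show ?thesis by simp
qed

end
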